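(* For all $N\ge2$, $n\ge0$ and all $x\in\mathbb{T}^N=\{x\in\mathbb{C}^N:|x_j|=1\ \forall j\}$, $\sigma_n^{N-1}(x)$ is real and $\sigma_n^{N-1}(x)\ge0$.
   Context: $(t)_m=\prod_{i=1}^m(t+i-1)$. $\boldsymbol{Z}_{N,k}=\{\alpha\in\mathbb{Z}^N:\sum_i\alpha_i=0,\ \sum_i|\alpha_i|=2k\}$, $S_k(x)=\sum_{\alpha\in\boldsymbol{Z}_{N,k}}x^\alpha$, and for $\delta>0$, $\sigma_n^\delta(x)=\sum_{k=0}^n\frac{(-n)_k}{(-n-\delta)_k}S_k(x)$. *)

theory Defs
  imports Complex_Main
begin

text \<open>Vectors in Z^N / C^N are modelled as functions on nat, with indices 0..N-1;
  multi-indices alpha are required to vanish outside {..<N}.\<close>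

definition Zset :: "nat \<Rightarrow> nat \<Rightarrow> (nat \<Rightarrow> int) set" where
  "Zset N k = {\<alpha>. (\<forall>i\<ge>N. \<alpha> i = 0) \<and> (\<Sum>i<N. \<alpha> i) = 0
                    \<and> (\<Sum>i<N. \<bar>\<alpha> i\<bar>) = 2 * int k}"

definition monom_pow :: "nat \<Rightarrow> (nat \<Rightarrow> complex) \<Rightarrow> (nat \<Rightarrow> int) \<Rightarrow> complex" where
  "monom_pow N x \<alpha> = (\<Prod>i<N. x i powi \<alpha> i)"

definition S :: "nat \<Rightarrow> nat \<Rightarrow> (nat \<Rightarrow> complex) \<Rightarrow> complex" where
  "S N k x = (\<Sum>\<alpha>\<in>Zset N k. monom_pow N x \<alpha>)"

definition sigma :: "nat \<Rightarrow> real \<Rightarrow> nat \<Rightarrow> (nat \<Rightarrow> complex) \<Rightarrow> complex" where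
  "sigma N \<delta> n x = (\<Sum>k=0..n. complex_of_real
       (pochhammer (- real n) k / pochhammer (- real n - \<delta>) k) * S N k x)"

end

theory Submission imports Defs "HOL-Library.FuncSet" begin

definition Bset :: "nat \<Rightarrow> nat \<Rightarrow> (nat \<Rightarrow> nat) set" where
  "Bset N m = {\<beta>. (\<forall>i\<ge>N. \<beta> i = 0) \<and> (\<Sum>i<N. \<beta> i) = m}"

definition mp :: "nat \<Rightarrow> (nat \<Rightarrow> complex) \<Rightarrow> (nat \<Rightarrow> nat) \<Rightarrow> complex" where
  "mp N x \<beta> = (\<Prod>i<N. x i ^ \<beta> i)"

lemma finite_funs_zero:
  assumes "finite A"
  shows "finite {f :: nat \<Rightarrow> 'a::zero. (\<forall>i\<ge>N. f i = 0) \<and> (\<forall>i<N. f i \<in> A)}"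
proof -
  have "{f :: nat \<Rightarrow> 'a. (\<forall>i\<ge>N. f i = 0) \<and> (\<forall>i<N. f i \<in> A)}
     \<subseteq> (\<lambda>g i. if i < N then g i else 0) ` (PiE {..<N} (\<lambda>_. A))"
  proof
    fix f :: "nat \<Rightarrow> 'a" assume f: "f \<in> {f. (\<forall>i\<ge>N. f i = 0) \<and> (\<forall>i<N. f i \<in> A)}"
    have "f = (\<lambda>i. if i < N then restrict f {..<N} i else 0)"
      using f by (auto simp: fun_eq_iff)
    moreover have "restrict f {..<N} \<in> PiE {..<N} (\<lambda>_. A)" using f by auto
    ultimately show "f \<in> (\<lambda>g i. if i < N then g i else 0) ` (PiE {..<N} (\<lambda>_. A))" by blast
  qed
  moreover have "finite (PiE {..<N} (\<lambda>_. A))" using assms by (simp add: finite_PiE)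
  ultimately show ?thesis by (meson finite_imageI finite_subset)
qed

lemma finite_Bset: "finite (Bset N m)"
proof -
  have "Bset N m \<subseteq> {f. (\<forall>i\<ge>N. f i = 0) \<and> (\<forall>i<N. f i \<in> {0..m})}"
  proof safe
    fix f i assume "f \<in> Bset N m" "i < N"
    then have "f i \<le> (\<Sum>i<N. f i)" "(\<Sum>i<N. f i) = m"
      by (auto simp: Bset_def intro!: member_le_sum)
    then show "f i \<in> {0..m}" by auto
  qed (auto simp: Bset_def)
  then show ?thesis using finite_funs_zero[of "{0..m}" N] finite_subset by blast
qed

lemma finite_Zset: "finite (Zset N k)"
proof -
  have "Zset N k \<subseteq> {f. (\<forall>i\<ge>N. f i = 0) \<and> (\<forall>i<N. f i \<in> {-2*int k..2*int k})}"
  proof safe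
    fix f i assume "f \<in> Zset N k" "i < N"
    then have "\<bar>f i\<bar> \<le> (\<Sum>i<N. \<bar>f i\<bar>)"
      by (intro member_le_sum) auto
    moreover have "(\<Sum>i<N. \<bar>f i\<bar>) = 2 * int k" using \<open>f \<in> Zset N k\<close> by (auto simp: Zset_def)
    ultimately show "f i \<in> {-2*int k..2*int k}" by auto
  qed (auto simp: Zset_def)
  then show ?thesis using finite_funs_zero[of "{-2*int k..2*int k}" N] finite_subset by blast
qed

lemma card_Bset: "card (Bset N m) = (m + N - 1) choose m"
proof -
  have "bij_betw (\<lambda>\<beta>. map \<beta> [0..<N]) (Bset N m) {l::nat list. size l = N \<and> sum_list l = m}"
  proof (rule bij_betw_byWitness[where f' = "\<lambda>l i. if i < N then l ! i else 0"])
    show "\<forall>a\<in>Bset N m. (\<lambda>i. if i < N then map a [0..<N] ! i else 0) = a"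
      by (auto simp: Bset_def fun_eq_iff)
    show "\<forall>a'\<in>{l. length l = N \<and> sum_list l = m}.
          map (\<lambda>i. if i < N then a' ! i else 0) [0..<N] = a'"
      by (auto intro: nth_equalityI)
    show "(\<lambda>\<beta>. map \<beta> [0..<N]) ` Bset N m \<subseteq> {l. length l = N \<and> sum_list l = m}"
      by (auto simp: Bset_def sum_list_map_eq_sum_count2 atLeast0LessThan
          simp flip: sum_set_upt_conv_sum_list_nat)
    show "(\<lambda>l i. if i < N then l ! i else 0) ` {l. length l = N \<and> sum_list l = m} \<subseteq> Bset N m"
      by (auto simp: Bset_def sum_list_sum_nth atLeast0LessThan)
  qed
  then have "card (Bset N m) = card {l::nat list. size l = N \<and> sum_list l = m}"
    by (rule bij_betw_same_card)
  then show ?thesis by (simp add: card_length_sum_list)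
qed


lemma poch_neg: "pochhammer (- real m) k = (-1)^k * fact k * real (m choose k)"
proof -
  have "real m gchoose k = (- 1) ^ k * pochhammer (- real m) k / fact k"
    by (rule gbinomial_pochhammer)
  moreover have "(-1::real)^k * (-1)^k = 1" by (simp flip: power_mult_distrib)
  ultimately have "pochhammer (- real m) k = (-1)^k * fact k * (real m gchoose k)"
  proof -
    assume a: "real m gchoose k = (- 1) ^ k * pochhammer (- real m) k / fact k"
       and b: "(-1::real)^k * (-1)^k = 1"
    have "fact k * (real m gchoose k) = (- 1) ^ k * pochhammer (- real m) k"
      using a by simp
    then have "(-1)^k * (fact k * (real m gchoose k)) = ((-1)^k * (- 1) ^ k) * pochhammer (- real m) k"
      by (simp add: mult.assoc)
    then show ?thesis using b by (simp add: mult.assoc)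
  qed
  then show ?thesis by (simp add: binomial_gbinomial)
qed

lemma coef:
  assumes "k \<le> n" "N \<ge> 1"
  shows "pochhammer (- real n) k / pochhammer (- real n - (real N - 1)) k
       = real (card (Bset N (n-k))) / real (card (Bset N n))"
proof -
  define M where "M = n + N - 1"
  have e: "- real n - (real N - 1) = - real M" using assms by (simp add: M_def of_nat_diff)
  have cm: "(M choose n) * (n choose k) = (M choose k) * ((M - k) choose (n - k))"
    using assms by (intro choose_mult) (auto simp: M_def)
  have nz1: "M choose k \<noteq> 0" "M choose n \<noteq> 0" using assms by (auto simp: M_def)
  have c1: "card (Bset N (n-k)) = (M - k) choose (n - k)"
    using assms by (simp add: card_Bset M_def)
  have c2: "card (Bset N n) = M choose n" by (simp add: card_Bset M_def)
  have "real (M choose n) * real (n choose k) = real (M choose k) * real ((M - k) choose (n - k))"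
    using cm by (metis of_nat_mult)
  then show ?thesis
    unfolding e poch_neg c1 c2 using nz1
    by (simp add: field_simps)
qed

lemma monom_split:
  assumes "\<forall>j<N. norm (x j) = 1"
  shows "monom_pow N x (\<lambda>i. int (\<beta> i) - int (\<gamma> i)) = mp N x \<beta> * cnj (mp N x \<gamma>)"
proof -
  have "x i powi (int (\<beta> i) - int (\<gamma> i)) = x i ^ \<beta> i * cnj (x i) ^ \<gamma> i" if "i < N" for i
  proof -
    have n1: "norm (x i) = 1" using assms that by auto
    then have nz: "x i \<noteq> 0" by auto
    have "x i * cnj (x i) = 1" using complex_norm_square[of "x i"] n1 by simp
    then have inv: "cnj (x i) = 1 / x i" using nz by (simp add: field_simps)
    show ?thesis using nz
      by (simp add: power_int_diff inv power_one_over divide_inverse power_inverse)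
  qed
  then show ?thesis
    unfolding monom_pow_def mp_def by (simp add: prod.distrib)
qed


lemma Zset_pos:
  assumes "\<alpha> \<in> Zset N k"
  shows "(\<Sum>i<N. nat (\<alpha> i)) = k" "(\<Sum>i<N. nat (- \<alpha> i)) = k"
proof -
  have s0: "(\<Sum>i<N. \<alpha> i) = 0" and s1: "(\<Sum>i<N. \<bar>\<alpha> i\<bar>) = 2 * int k"
    using assms by (auto simp: Zset_def)
  have "2 * int (\<Sum>i<N. nat (\<alpha> i)) = (\<Sum>i<N. \<alpha> i + \<bar>\<alpha> i\<bar>)"
    by (simp add: sum_distrib_left of_nat_sum) (intro sum.cong; auto)
  also have "\<dots> = 2 * int k" using s0 s1 by (simp add: sum.distrib)
  finally show "(\<Sum>i<N. nat (\<alpha> i)) = k" by (simp only: mult_cancel_left of_nat_eq_iff) simp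
  have "2 * int (\<Sum>i<N. nat (- \<alpha> i)) = (\<Sum>i<N. - \<alpha> i + \<bar>\<alpha> i\<bar>)"
    by (simp add: sum_distrib_left of_nat_sum) (intro sum.cong; auto)
  also have "\<dots> = 2 * int k" using s0 s1 by (simp add: sum_subtractf)
  finally show "(\<Sum>i<N. nat (- \<alpha> i)) = k" by (simp only: mult_cancel_left of_nat_eq_iff) simp
qed

lemma comb:
  "(\<Sum>p\<in>Bset N n \<times> Bset N n. monom_pow N x (\<lambda>i. int (fst p i) - int (snd p i)))
   = (\<Sum>k=0..n. of_nat (card (Bset N (n-k))) * S N k x)"
proof -
  have "(\<Sum>k=0..n. of_nat (card (Bset N (n-k))) * S N k x)
     = (\<Sum>k=0..n. \<Sum>q\<in>Zset N k \<times> Bset N (n-k). monom_pow N x (fst q))"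
  proof (intro sum.cong refl)
    fix k
    have "(\<Sum>q\<in>Zset N k \<times> Bset N (n-k). monom_pow N x (fst q))
        = (\<Sum>a\<in>Zset N k. \<Sum>b\<in>Bset N (n-k). monom_pow N x a)"
      by (subst sum.cartesian_product) (simp add: case_prod_unfold)
    then show "of_nat (card (Bset N (n-k))) * S N k x
        = (\<Sum>q\<in>Zset N k \<times> Bset N (n-k). monom_pow N x (fst q))"
      by (simp add: S_def sum_distrib_right mult.commute)
  qed
  also have "\<dots> = (\<Sum>t\<in>Sigma {0..n} (\<lambda>k. Zset N k \<times> Bset N (n-k)). monom_pow N x (fst (snd t)))"
    by (subst sum.Sigma) (auto simp: finite_Zset finite_Bset case_prod_unfold)
  also have "\<dots> = (\<Sum>p\<in>Bset N n \<times> Bset N n. monom_pow N x (\<lambda>i. int (fst p i) - int (snd p i)))"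
  proof (rule sum.reindex_bij_witness[where
        j = "\<lambda>(k,\<alpha>,\<mu>). (\<lambda>i. nat (\<alpha> i) + \<mu> i, \<lambda>i. nat (- \<alpha> i) + \<mu> i)" and
        i = "\<lambda>(\<beta>,\<gamma>). (n - (\<Sum>i<N. min (\<beta> i) (\<gamma> i)), \<lambda>i. int (\<beta> i) - int (\<gamma> i),
                   \<lambda>i. min (\<beta> i) (\<gamma> i))"])
    fix t assume t: "t \<in> Sigma {0..n} (\<lambda>k. Zset N k \<times> Bset N (n-k))"
    obtain k \<alpha> \<mu> where t_eq: "t = (k,\<alpha>,\<mu>)" by (cases t) auto
    have k: "k \<le> n" and a: "\<alpha> \<in> Zset N k" and m: "\<mu> \<in> Bset N (n-k)" using t t_eq by auto
    have mu: "(\<Sum>i<N. \<mu> i) = n - k" using m by (simp add: Bset_def)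
    have minm: "(\<lambda>i. min (nat (\<alpha> i) + \<mu> i) (nat (- \<alpha> i) + \<mu> i)) = \<mu>"
      by (auto simp: fun_eq_iff)
    have dif: "(\<lambda>i. int (nat (\<alpha> i) + \<mu> i) - int (nat (- \<alpha> i) + \<mu> i)) = \<alpha>"
      by (auto simp: fun_eq_iff)
    show "(case case t of (k, \<alpha>, \<mu>) \<Rightarrow> (\<lambda>i. nat (\<alpha> i) + \<mu> i, \<lambda>i. nat (- \<alpha> i) + \<mu> i) of
          (\<beta>, \<gamma>) \<Rightarrow> (n - (\<Sum>i<N. min (\<beta> i) (\<gamma> i)), \<lambda>i. int (\<beta> i) - int (\<gamma> i),
             \<lambda>i. min (\<beta> i) (\<gamma> i))) = t"
      using k mu unfolding t_eq prod.case minm dif by simp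
    have zs: "\<forall>i\<ge>N. \<alpha> i = 0" "\<forall>i\<ge>N. \<mu> i = 0" using a m by (auto simp: Zset_def Bset_def)
    show "(case t of (k, \<alpha>, \<mu>) \<Rightarrow> (\<lambda>i. nat (\<alpha> i) + \<mu> i, \<lambda>i. nat (- \<alpha> i) + \<mu> i))
          \<in> Bset N n \<times> Bset N n"
      using zs Zset_pos[OF a] mu k unfolding t_eq by (simp add: Bset_def sum.distrib)
    show "monom_pow N x (\<lambda>i. int (fst (case t of (k, \<alpha>, \<mu>) \<Rightarrow> (\<lambda>i. nat (\<alpha> i) + \<mu> i, \<lambda>i. nat (- \<alpha> i) + \<mu> i)) i)
             - int (snd (case t of (k, \<alpha>, \<mu>) \<Rightarrow> (\<lambda>i. nat (\<alpha> i) + \<mu> i, \<lambda>i. nat (- \<alpha> i) + \<mu> i)) i))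
          = monom_pow N x (fst (snd t))"
      unfolding t_eq prod.case fst_conv snd_conv dif by simp
  next
    fix p assume p: "p \<in> Bset N n \<times> Bset N n"
    obtain \<beta> \<gamma> where p_eq: "p = (\<beta>, \<gamma>)" by (cases p) auto
    have b: "\<beta> \<in> Bset N n" and g: "\<gamma> \<in> Bset N n" using p p_eq by auto
    have sb: "(\<Sum>i<N. \<beta> i) = n" and sg: "(\<Sum>i<N. \<gamma> i) = n"
      and zb: "\<forall>i\<ge>N. \<beta> i = 0" and zg: "\<forall>i\<ge>N. \<gamma> i = 0"
      using b g by (auto simp: Bset_def)
    define m where "m = (\<Sum>i<N. min (\<beta> i) (\<gamma> i))"
    have mle: "m \<le> n" unfolding m_def sb[symmetric] by (intro sum_mono) auto
    show "(case case p of (\<beta>, \<gamma>) \<Rightarrow> (n - (\<Sum>i<N. min (\<beta> i) (\<gamma> i)), \<lambda>i. int (\<beta> i) - int (\<gamma> i),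
             \<lambda>i. min (\<beta> i) (\<gamma> i)) of
          (k, \<alpha>, \<mu>) \<Rightarrow> (\<lambda>i. nat (\<alpha> i) + \<mu> i, \<lambda>i. nat (- \<alpha> i) + \<mu> i)) = p"
      unfolding p_eq by (auto simp: fun_eq_iff)
    have sa: "(\<Sum>i<N. int (\<beta> i) - int (\<gamma> i)) = 0"
      using sb sg by (simp add: sum_subtractf flip: of_nat_sum)
    have mm: "(\<Sum>i<N. 2 * int (min (\<beta> i) (\<gamma> i))) = 2 * int m"
      unfolding m_def of_nat_sum sum_distrib_left ..
    have "(\<Sum>i<N. \<bar>int (\<beta> i) - int (\<gamma> i)\<bar>) = (\<Sum>i<N. int (\<beta> i) + int (\<gamma> i) - 2 * int (min (\<beta> i) (\<gamma> i)))"
      by (intro sum.cong) auto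
    also have "\<dots> = int n + int n - 2 * int m"
      using sb sg mm by (simp add: sum_subtractf sum.distrib flip: of_nat_sum)
    also have "\<dots> = 2 * int (n - m)" using mle by simp
    finally have sabs: "(\<Sum>i<N. \<bar>int (\<beta> i) - int (\<gamma> i)\<bar>) = 2 * int (n - m)" .
    show "(case p of (\<beta>, \<gamma>) \<Rightarrow> (n - (\<Sum>i<N. min (\<beta> i) (\<gamma> i)), \<lambda>i. int (\<beta> i) - int (\<gamma> i),
             \<lambda>i. min (\<beta> i) (\<gamma> i))) \<in> Sigma {0..n} (\<lambda>k. Zset N k \<times> Bset N (n-k))"
      unfolding p_eq using sa sabs mle zb zg
      by (simp add: m_def[symmetric] Zset_def Bset_def)
  qed
  finally show ?thesis ..
qed


theorem corollary4p6:
  fixes N n :: nat and x :: "nat \<Rightarrow> complex"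
  assumes "N \<ge> 2"
    and "\<forall>j<N. norm (x j) = 1"
  shows "sigma N (real N - 1) n x \<in> \<real> \<and> 0 \<le> Re (sigma N (real N - 1) n x)"
proof -
  define A where "A = real (card (Bset N n))"
  define h where "h = (\<Sum>\<beta>\<in>Bset N n. mp N x \<beta>)"
  have "sigma N (real N - 1) n x
      = (\<Sum>k=0..n. complex_of_real (1 / A) * (of_nat (card (Bset N (n-k))) * S N k x))"
    unfolding sigma_def
  proof (intro sum.cong refl)
    fix k assume "k \<in> {0..n}"
    then have "pochhammer (- real n) k / pochhammer (- real n - (real N - 1)) k
       = real (card (Bset N (n-k))) / A" using assms(1) unfolding A_def by (intro coef) auto
    then show "complex_of_real (pochhammer (- real n) k / pochhammer (- real n - (real N - 1)) k) * S N k x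
        = complex_of_real (1 / A) * (of_nat (card (Bset N (n-k))) * S N k x)"
      by simp
  qed
  also have "\<dots> = complex_of_real (1 / A) * (\<Sum>k=0..n. of_nat (card (Bset N (n-k))) * S N k x)"
    by (simp add: sum_distrib_left)
  also have "(\<Sum>k=0..n. of_nat (card (Bset N (n-k))) * S N k x)
      = (\<Sum>p\<in>Bset N n \<times> Bset N n. monom_pow N x (\<lambda>i. int (fst p i) - int (snd p i)))"
    by (rule comb[symmetric])
  also have "\<dots> = (\<Sum>p\<in>Bset N n \<times> Bset N n. mp N x (fst p) * cnj (mp N x (snd p)))"
    using assms(2) by (intro sum.cong refl monom_split)
  also have "\<dots> = h * cnj h"
    unfolding h_def cnj_sum sum_product
    by (subst sum.cartesian_product) (simp add: case_prod_unfold)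
  also have "h * cnj h = complex_of_real ((norm h)\<^sup>2)"
    by (rule complex_norm_square[symmetric])
  finally have e: "sigma N (real N - 1) n x = complex_of_real (1 / A * (norm h)\<^sup>2)"
    by simp
  have "A \<ge> 0" unfolding A_def by simp
  then show ?thesis unfolding e by (simp add: Reals_of_real)
qed

end
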